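(* Let $d\ge 2$ and let $\rho_{DS}=\sum_{\mathbf{k}} p_{\mathbf{k}}\,|D_{\mathbf{k}}\rangle\langle D_{\mathbf{k}}|$ be a diagonal symmetric state on $(\mathbb{C}^d)^{\otimes 3}$. Let $M^{(3)}(\rho_{DS})=\bigoplus_{i=0}^{d-1}M^{(3)}_i(\rho_{DS})$, where $M^{(3)}_i(\rho_{DS})$ is the $d\times d$ matrix with entries $\big(M^{(3)}_i\big)_{ab}=\bar p_{iab}$, $a,b\in\{0,\dots,d-1\}$. Then $\rho_{DS}$ is PPT if and only if $M^{(3)}(\rho_{DS})\in\mathcal{DNN}_{d^2}$.
   Context: For $N$ parties and local dimension $d$, $\mathbf{k}=(k_0,\dots,k_{d-1})$, $k_i\ge0$, $\sum_ik_i=N$, and the Dicke state is $|D_{\mathbf k}\rangle=\binom{N}{\mathbf k}^{-1/2}\sum_{\pi}\pi\big(|0\rangle^{\otimes k_0}\otimes\cdots\otimes|d-1\rangle^{\otimes k_{d-1}}\big)$, summing over all distinct permutations of tensor factors, with $\binom{N}{\mathbf k}=\frac{N!}{k_0!\cdots k_{d-1}!}$. A diagonal symmetric state is $\sum_{\mathbf k}p_{\mathbf k}|D_{\mathbf k}\rangle\langle D_{\mathbf k}|$ with $p_{\mathbf k}\ge0$, $\sum p_{\mathbf k}=1$. Here $N=3$; $p_{ijk}$ denotes the coefficient of the Dicke state with index multiset $\{i,j,k\}$, and $\bar p_{ijk}=p_{ijk}/N_{ijk}$ with $N_{ijk}=1$ if $i=j=k$, $3$ if exactly two indices coincide, $6$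 if all are distinct. The state is PPT if its partial transpose with respect to a single party (by permutation symmetry, any party) is positive semidefinite. $\mathcal{DNN}_n$ is the cone of $n\times n$ doubly non-negative matrices: positive semidefinite with all entries non-negative. *)

theory Defs
  imports Complex_Main "HOL-Library.Multiset"
begin

text \<open>Computational basis of (C^d)^(x3): triples (x,y,z) with entries in {0..<d}.
  Operators are matrices indexed by these triples.\<close>
definition idx3 :: "nat \<Rightarrow> (nat \<times> nat \<times> nat) set" where
  "idx3 d = {0..<d} \<times> {0..<d} \<times> {0..<d}"

text \<open>Dicke indices k = (k_0,...,k_{d-1}) with sum 3, represented as multisets of size 3
  over {0..<d} (count k i = k_i).\<close>
definition dicke_idx :: "nat \<Rightarrow> nat multiset set" where
  "dicke_idx d = {k. size k = 3 \<and> set_mset k \<subseteq> {0..<d}}"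

definition multinom3 :: "nat multiset \<Rightarrow> real" where
  "multinom3 k = fact 3 / (\<Prod>i\<in>set_mset k. fact (count k i))"

text \<open>Dicke state |D_k>: sum over distinct permutations of |0..0 1..1 ...>, normalised;
  its amplitude at basis vector |x y z> is binom^(-1/2) iff {x,y,z} = k as multisets.\<close>
definition dicke_vec :: "nat multiset \<Rightarrow> nat \<times> nat \<times> nat \<Rightarrow> complex" where
  "dicke_vec k = (\<lambda>(x,y,z). if {#x, y, z#} = k then complex_of_real (1 / sqrt (multinom3 k)) else 0)"

definition rho_DS :: "nat \<Rightarrow> (nat multiset \<Rightarrow> real) \<Rightarrow>
    (nat \<times> nat \<times> nat) \<Rightarrow> (nat \<times> nat \<times> nat) \<Rightarrow> complex" where
  "rho_DS d p = (\<lambda>a b. \<Sum>k\<in>dicke_idx d. complex_of_real (p k) * dicke_vec k a * cnj (dicke_vec k b))"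

definition diag_sym_state :: "nat \<Rightarrow> (nat multiset \<Rightarrow> real) \<Rightarrow> bool" where
  "diag_sym_state d p \<longleftrightarrow> (\<forall>k\<in>dicke_idx d. 0 \<le> p k) \<and> (\<Sum>k\<in>dicke_idx d. p k) = 1"

definition partial_transpose1 ::
  "((nat \<times> nat \<times> nat) \<Rightarrow> (nat \<times> nat \<times> nat) \<Rightarrow> complex) \<Rightarrow>
   (nat \<times> nat \<times> nat) \<Rightarrow> (nat \<times> nat \<times> nat) \<Rightarrow> complex" where
  "partial_transpose1 A = (\<lambda>(x,y,z) (x',y',z'). A (x',y,z) (x,y',z'))"

definition psd_on :: "'i set \<Rightarrow> ('i \<Rightarrow> 'i \<Rightarrow> complex) \<Rightarrow> bool" where
  "psd_on I A \<longleftrightarrow> (\<forall>a\<in>I. \<forall>b\<in>I. A a b = cnj (A b a)) \<and>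
     (\<forall>v :: 'i \<Rightarrow> complex. 0 \<le> Re (\<Sum>a\<in>I. \<Sum>b\<in>I. cnj (v a) * A a b * v b))"

definition PPT :: "nat \<Rightarrow> (nat multiset \<Rightarrow> real) \<Rightarrow> bool" where
  "PPT d p \<longleftrightarrow> psd_on (idx3 d) (partial_transpose1 (rho_DS d p))"

definition real_psd_on :: "'i set \<Rightarrow> ('i \<Rightarrow> 'i \<Rightarrow> real) \<Rightarrow> bool" where
  "real_psd_on I M \<longleftrightarrow> (\<forall>a\<in>I. \<forall>b\<in>I. M a b = M b a) \<and>
     (\<forall>v :: 'i \<Rightarrow> real. 0 \<le> (\<Sum>a\<in>I. \<Sum>b\<in>I. v a * M a b * v b))"

definition DNN_on :: "'i set \<Rightarrow> ('i \<Rightarrow> 'i \<Rightarrow> real) \<Rightarrow> bool" where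
  "DNN_on I M \<longleftrightarrow> real_psd_on I M \<and> (\<forall>a\<in>I. \<forall>b\<in>I. 0 \<le> M a b)"

definition N3 :: "nat multiset \<Rightarrow> real" where
  "N3 k = (if card (set_mset k) = 1 then 1 else if card (set_mset k) = 2 then 3 else 6)"

definition pbar :: "(nat multiset \<Rightarrow> real) \<Rightarrow> nat multiset \<Rightarrow> real" where
  "pbar p k = p k / N3 k"

text \<open>M^(3) = direct sum over i of M_i, (M_i)_{ab} = pbar_{iab}; indexed by pairs (i,a),
  i.e. a d^2 x d^2 block-diagonal matrix.\<close>
definition M3 :: "(nat multiset \<Rightarrow> real) \<Rightarrow> nat \<times> nat \<Rightarrow> nat \<times> nat \<Rightarrow> real" where
  "M3 p = (\<lambda>(i,a) (j,b). if i = j then pbar p {#i, a, b#} else 0)"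

end

theory Submission
  imports Defs
begin

lemma mset2_eq: "{#a,b#} = {#d,e::nat#} \<longleftrightarrow> (a=d\<and>b=e) \<or> (a=e\<and>b=d)"
  by (auto simp: add_eq_conv_diff)
lemma dicke_finite: "finite (dicke_idx d)"
proof -
  have "dicke_idx d = multisets_of_size {0..<d} 3"
    unfolding dicke_idx_def multisets_of_size_def by auto
  then show ?thesis by auto
qed

lemma multinom_N3: "multinom3 {#x,y,z#} = N3 {#x,y,z#}"
  unfolding multinom3_def N3_def
  by (cases "x = y"; cases "x = z"; cases "y = z") (auto simp: fact_numeral insert_commute)

lemma N3_pos: "N3 k > 0" unfolding N3_def by auto

lemma rho_eq:
  assumes "x < d" "y < d" "z < d"
  shows "rho_DS d p (x,y,z) (x',y',z') =
    complex_of_real (if {#x,y,z#} = {#x',y',z'#} then pbar p {#x,y,z#} else 0)"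
proof -
  let ?m = "{#x,y,z#}"
  have mpos: "multinom3 ?m > 0" using multinom_N3 N3_pos by metis
  have sq: "complex_of_real (1 / sqrt (multinom3 ?m)) * cnj (complex_of_real (1 / sqrt (multinom3 ?m)))
      = complex_of_real (1 / N3 ?m)"
    using mpos by (simp add: multinom_N3 flip: of_real_mult)
  have trm: "complex_of_real (p k) * dicke_vec k (x,y,z) * cnj (dicke_vec k (x',y',z')) =
     (if k = ?m then complex_of_real (if ?m = {#x',y',z'#} then pbar p ?m else 0) else 0)" for k
  proof (cases "k = ?m")
    case True
    then show ?thesis unfolding dicke_vec_def pbar_def
      using sq by (auto simp: divide_inverse mult.assoc of_real_inverse)
  next
    case False
    then show ?thesis unfolding dicke_vec_def by auto
  qed
  have mem: "?m \<in> dicke_idx d" using assms unfolding dicke_idx_def by auto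
  show ?thesis unfolding rho_DS_def trm sum.delta[OF dicke_finite]
    using mem by simp
qed



lemma re_form:
  "Re (\<Sum>a\<in>I. \<Sum>b\<in>I. cnj (v a) * complex_of_real (B a b) * v b) =
   (\<Sum>a\<in>I. \<Sum>b\<in>I. Re (v a) * B a b * Re (v b)) + (\<Sum>a\<in>I. \<Sum>b\<in>I. Im (v a) * B a b * Im (v b))"
  by (simp add: sum.distrib[symmetric] algebra_simps)

lemma congr_psd:
  fixes K :: "'a \<Rightarrow> 'a \<Rightarrow> real" and A :: "'r \<Rightarrow> 'r \<Rightarrow> real"
  assumes K: "\<And>v. 0 \<le> (\<Sum>a\<in>I. \<Sum>b\<in>I. v a * K a b * v b)"
    and A: "\<And>r c. r\<in>R \<Longrightarrow> c\<in>R \<Longrightarrow> A r c = (\<Sum>a\<in>I. \<Sum>b\<in>I. \<phi> a r * \<phi> b c * K a b)"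
  shows "0 \<le> (\<Sum>r\<in>R. \<Sum>c\<in>R. w r * A r c * w c)"
proof -
  define U where "U a = (\<Sum>r\<in>R. w r * \<phi> a r)" for a
  have "(\<Sum>r\<in>R. \<Sum>c\<in>R. w r * A r c * w c) =
        (\<Sum>r\<in>R. \<Sum>c\<in>R. \<Sum>a\<in>I. \<Sum>b\<in>I. w r * \<phi> a r * K a b * (\<phi> b c * w c))"
    by (intro sum.cong refl) (simp add: A sum_distrib_left sum_distrib_right mult_ac)
  also have "\<dots> = (\<Sum>r\<in>R. \<Sum>a\<in>I. \<Sum>b\<in>I. \<Sum>c\<in>R. w r * \<phi> a r * K a b * (\<phi> b c * w c))"
    apply (intro sum.cong refl)
    apply (rule trans[OF sum.swap])
    apply (intro sum.cong refl)
    apply (rule sum.swap)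
    done
  also have "\<dots> = (\<Sum>a\<in>I. \<Sum>b\<in>I. \<Sum>r\<in>R. \<Sum>c\<in>R. w r * \<phi> a r * K a b * (\<phi> b c * w c))"
    apply (rule trans[OF sum.swap])
    apply (intro sum.cong refl)
    apply (rule sum.swap)
    done
  also have "\<dots> = (\<Sum>a\<in>I. \<Sum>b\<in>I. U a * K a b * U b)"
    unfolding U_def by (intro sum.cong refl) (simp add: sum_distrib_left sum_distrib_right mult_ac)
  finally show ?thesis using K[of U] by simp
qed



definition PTr :: "(nat multiset \<Rightarrow> real) \<Rightarrow> nat\<times>nat\<times>nat \<Rightarrow> nat\<times>nat\<times>nat \<Rightarrow> real" where
 "PTr p = (\<lambda>(x,y,z) (x',y',z'). if {#x',y,z#} = {#x,y',z'#} then pbar p {#x',y,z#} else 0)"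

definition P1 :: "nat\<times>nat\<times>nat \<Rightarrow> bool" where "P1 = (\<lambda>(x,y,z). y = x \<or> z = x)"
definition f1 :: "nat\<times>nat\<times>nat \<Rightarrow> nat\<times>nat" where "f1 = (\<lambda>(x,y,z). ((if y = x then z else y), x))"
definition f2 :: "nat\<times>nat\<times>nat \<Rightarrow> nat\<times>nat\<times>nat" where "f2 = (\<lambda>(x,y,z). (x, min y z, max y z))"
definition D2 :: "(nat multiset \<Rightarrow> real) \<Rightarrow> nat\<times>nat\<times>nat \<Rightarrow> real" where
  "D2 p = (\<lambda>(a,b,c). if a \<noteq> b \<and> a \<noteq> c then pbar p {#a,b,c#} else 0)"

lemma minmax_eq: "(min y z = min y' z' \<and> max y z = max y' (z'::nat)) \<longleftrightarrow> {#y,z#} = {#y',z'#}"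
  unfolding mset2_eq by (auto simp: min_def max_def)

lemma PTr_split:
  "PTr p r c = (if P1 r \<and> P1 c then M3 p (f1 r) (f1 c) else 0) + (if f2 r = f2 c then D2 p (f2 r) else 0)"
proof -
  obtain x y z where r: "r = (x,y,z)" by (cases r) auto
  obtain x' y' z' where c: "c = (x',y',z')" by (cases c) auto
  define o1 where "o1 = (if y = x then z else y)"
  define o2 where "o2 = (if y' = x' then z' else y')"
  have F1: "f2 r = f2 c \<longleftrightarrow> x = x' \<and> {#y,z#} = {#y',z'#}"
    unfolding r c f2_def using minmax_eq by auto
  have F2: "D2 p (f2 r) = (if x \<noteq> y \<and> x \<noteq> z then pbar p {#x,y,z#} else 0)"
    unfolding r f2_def D2_def by (auto simp: min_def max_def add_mset_commute)
  have E: "PTr p r c = (if add_mset x' {#y,z#} = add_mset x {#y',z'#} then pbar p (add_mset x' {#y,z#}) else 0)"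
    unfolding r c PTr_def by simp
  have S1: "P1 r \<Longrightarrow> {#y,z#} = {#x,o1#}" unfolding r P1_def o1_def by (auto simp: add_mset_commute)
  have S2: "P1 c \<Longrightarrow> {#y',z'#} = {#x',o2#}" unfolding c P1_def o2_def by (auto simp: add_mset_commute)
  have M: "M3 p (f1 r) (f1 c) = (if o1 = o2 then pbar p {#o1,x,x'#} else 0)"
    unfolding r c f1_def M3_def o1_def o2_def by simp
  have P1r: "P1 r \<longleftrightarrow> x \<in># {#y,z#}" unfolding r P1_def by auto
  have P1c: "P1 c \<longleftrightarrow> x' \<in># {#y',z'#}" unfolding c P1_def by auto
  show ?thesis
  proof (cases "P1 r")
    case True
    then have "\<not> (x \<noteq> y \<and> x \<noteq> z)" unfolding r P1_def by auto
    then have "D2 p (f2 r) = 0" using F2 by auto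
    then have z2: "(if f2 r = f2 c then D2 p (f2 r) else 0) = 0" by (simp only: if_cancel)
    show ?thesis
    proof (cases "P1 c")
      case True2: True
      have eqv: "add_mset x' {#y,z#} = add_mset x {#y',z'#} \<longleftrightarrow> o1 = o2"
        using S1[OF True] S2[OF True2] by (auto simp: add_mset_commute)
      have pb: "pbar p (add_mset x' {#y,z#}) = pbar p {#o1,x,x'#}" using S1[OF True] by (simp add: add_mset_commute)
      have "PTr p r c = (if o1 = o2 then pbar p {#o1,x,x'#} else 0)" unfolding E eqv pb ..
      then show ?thesis using M z2 True True2 by simp
    next
      case False2: False
      have "add_mset x' {#y,z#} \<noteq> add_mset x {#y',z'#}"
      proof
        assume "add_mset x' {#y,z#} = add_mset x {#y',z'#}"
        then have "add_mset x {#x',o1#} = add_mset x {#y',z'#}" using S1[OF True] by (simp add: add_mset_commute)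
        then have "{#x',o1#} = {#y',z'#}" by simp
        then have "x' \<in># {#y',z'#}" by (metis union_single_eq_member)
        then show False using False2 P1c by simp
      qed
      then show ?thesis using E z2 False2 by simp
    qed
  next
    case False
    then have nx: "x \<noteq> y" "x \<noteq> z" unfolding r P1_def by auto
    have "add_mset x' {#y,z#} = add_mset x {#y',z'#} \<longleftrightarrow> x = x' \<and> {#y,z#} = {#y',z'#}"
    proof
      assume eq: "add_mset x' {#y,z#} = add_mset x {#y',z'#}"
      have "x \<in># add_mset x' {#y,z#}" unfolding eq by simp
      then have "x = x'" using nx by auto
      then show "x = x' \<and> {#y,z#} = {#y',z'#}" using eq by simp
    qed auto
    then show ?thesis using E F1 F2 False nx by (auto simp: add_mset_commute)
  qed
qed

lemma delta2:
  fixes K :: "'a \<Rightarrow> 'a \<Rightarrow> real"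
  assumes "finite S" "P r \<Longrightarrow> f r \<in> S" "Q c \<Longrightarrow> g c \<in> S"
  shows "(\<Sum>a\<in>S. \<Sum>b\<in>S. (if P r \<and> a = f r then 1 else 0) * (if Q c \<and> b = g c then 1 else 0) * K a b)
     = (if P r \<and> Q c then K (f r) (g c) else 0)"
proof (cases "P r \<and> Q c")
  case True
  have e: "(if P r \<and> a = f r then 1 else 0) * (if Q c \<and> b = g c then 1 else 0) * K a b =
     (if b = g c then (if a = f r then K a b else 0) else 0)" for a b
    using True by auto
  have "f r \<in> S" "g c \<in> S" using True assms by auto
  then show ?thesis unfolding e using True by (simp add: sum.delta[OF assms(1)])
next
  case False
  have e: "(if P r \<and> a = f r then 1 else 0) * (if Q c \<and> b = g c then 1 else 0) * K a b = 0" for a b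
    using False by auto
  show ?thesis unfolding e using False by auto
qed

lemma pt_eq:
  assumes "r \<in> idx3 d" "c \<in> idx3 d"
  shows "partial_transpose1 (rho_DS d p) r c = complex_of_real (PTr p r c)"
proof -
  obtain x y z where r: "r = (x,y,z)" by (cases r) auto
  obtain x' y' z' where c: "c = (x',y',z')" by (cases c) auto
  have "x' < d" "y < d" "z < d" using assms unfolding r c idx3_def by auto
  then show ?thesis unfolding r c partial_transpose1_def PTr_def
    by (simp add: rho_eq)
qed

lemma PTr_sym: "PTr p r c = PTr p c r"
proof -
  obtain x y z where r: "r = (x,y,z)" by (cases r) auto
  obtain x' y' z' where c: "c = (x',y',z')" by (cases c) auto
  show ?thesis unfolding r c PTr_def by auto
qed

lemma idx3_finite: "finite (idx3 d)" unfolding idx3_def by simp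

theorem theorem5:
  fixes d :: nat and p :: "nat multiset \<Rightarrow> real"
  assumes "d \<ge> 2" and "diag_sym_state d p"
  shows "PPT d p \<longleftrightarrow> DNN_on ({0..<d} \<times> {0..<d}) (M3 p)"
proof -
  let ?I = "{0..<d} \<times> {0..<d}"
  let ?R = "idx3 d"
  have pnn: "\<And>k. k \<in> dicke_idx d \<Longrightarrow> 0 \<le> p k" using assms(2) unfolding diag_sym_state_def by auto
  have pbar_nn: "0 \<le> pbar p {#i,a,b#}" if "i < d" "a < d" "b < d" for i a b
  proof -
    have "{#i,a,b#} \<in> dicke_idx d" using that unfolding dicke_idx_def by auto
    then show ?thesis unfolding pbar_def using pnn N3_pos by (simp add: less_imp_le)
  qed
  have psdPT: "PPT d p \<longleftrightarrow> (\<forall>w. 0 \<le> (\<Sum>r\<in>?R. \<Sum>c\<in>?R. w r * PTr p r c * w c))"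
  proof -
    have red: "(\<Sum>a\<in>?R. \<Sum>b\<in>?R. cnj (v a) * partial_transpose1 (rho_DS d p) a b * v b)
       = (\<Sum>a\<in>?R. \<Sum>b\<in>?R. cnj (v a) * complex_of_real (PTr p a b) * v b)" for v
      by (intro sum.cong refl) (simp add: pt_eq)
    have herm: "\<forall>a\<in>?R. \<forall>b\<in>?R. partial_transpose1 (rho_DS d p) a b = cnj (partial_transpose1 (rho_DS d p) b a)"
      using pt_eq PTr_sym by simp
    show ?thesis
    proof
      assume "PPT d p"
      then have h: "0 \<le> Re (\<Sum>a\<in>?R. \<Sum>b\<in>?R. cnj (v a) * partial_transpose1 (rho_DS d p) a b * v b)" for v
        unfolding PPT_def psd_on_def by blast
      show "\<forall>w. 0 \<le> (\<Sum>r\<in>?R. \<Sum>c\<in>?R. w r * PTr p r c * w c)"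
      proof
        fix w :: "nat\<times>nat\<times>nat \<Rightarrow> real"
        show "0 \<le> (\<Sum>r\<in>?R. \<Sum>c\<in>?R. w r * PTr p r c * w c)"
          using h[of "\<lambda>a. complex_of_real (w a)"] unfolding red re_form by simp
      qed
    next
      assume h: "\<forall>w. 0 \<le> (\<Sum>r\<in>?R. \<Sum>c\<in>?R. w r * PTr p r c * w c)"
      show "PPT d p" unfolding PPT_def psd_on_def
      proof (intro conjI allI herm)
        fix v :: "nat\<times>nat\<times>nat \<Rightarrow> complex"
        show "0 \<le> Re (\<Sum>a\<in>?R. \<Sum>b\<in>?R. cnj (v a) * partial_transpose1 (rho_DS d p) a b * v b)"
          unfolding red re_form using h[rule_format, of "\<lambda>a. Re (v a)"] h[rule_format, of "\<lambda>a. Im (v a)"]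
          by simp
      qed
    qed
  qed
  have sw: "{#i,a,b#} = {#i,b,a::nat#}" for i a b by (simp add: add_mset_commute)
  have symM: "\<forall>a\<in>?I. \<forall>b\<in>?I. M3 p a b = M3 p b a"
    unfolding M3_def by (clarsimp, metis sw)
  have nnM: "\<forall>a\<in>?I. \<forall>b\<in>?I. 0 \<le> M3 p a b"
    unfolding M3_def using pbar_nn by auto
  have DNN: "DNN_on ?I (M3 p) \<longleftrightarrow> (\<forall>v. 0 \<le> (\<Sum>a\<in>?I. \<Sum>b\<in>?I. v a * M3 p a b * v b))"
    unfolding DNN_on_def real_psd_on_def using symM nnM by blast
  show ?thesis unfolding psdPT DNN
  proof
    assume h: "\<forall>w. 0 \<le> (\<Sum>r\<in>?R. \<Sum>c\<in>?R. w r * PTr p r c * w c)"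
    show "\<forall>v. 0 \<le> (\<Sum>a\<in>?I. \<Sum>b\<in>?I. v a * M3 p a b * v b)"
    proof
      fix v :: "nat\<times>nat \<Rightarrow> real"
      let ?f = "\<lambda>(i::nat,a::nat). (a,a,i)"
      show "0 \<le> (\<Sum>a\<in>?I. \<Sum>b\<in>?I. v a * M3 p a b * v b)"
      proof (rule congr_psd[where K = "PTr p" and I = ?R and \<phi> = "\<lambda>t ia. if True \<and> t = ?f ia then 1 else 0"])
        show "0 \<le> (\<Sum>a\<in>?R. \<Sum>b\<in>?R. u a * PTr p a b * u b)" for u using h by blast
      next
        fix ia jb assume ia: "ia \<in> ?I" and jb: "jb \<in> ?I"
        obtain i a where ia': "ia = (i,a)" by (cases ia) auto
        obtain j b where jb': "jb = (j,b)" by (cases jb) auto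
        have "(\<Sum>t\<in>?R. \<Sum>t'\<in>?R. (if True \<and> t = ?f ia then 1 else 0) * (if True \<and> t' = ?f jb then 1 else 0) * PTr p t t')
            = (if True \<and> True then PTr p (?f ia) (?f jb) else 0)"
          by (rule delta2[where S="?R" and P="\<lambda>_. True" and Q="\<lambda>_. True" and r=ia and c=jb and f="?f" and g="?f" and K="PTr p", OF idx3_finite])
             (use ia jb in \<open>auto simp: idx3_def\<close>)
        also have "\<dots> = M3 p ia jb"
        proof -
          have e1: "{#b,a,i#} = {#a,b,i#}" by (simp add: add_mset_commute)
          have e2: "{#a,b,i#} = {#a,b,j#} \<longleftrightarrow> i = j" by simp
          have e3: "{#a,b,i#} = {#i,a,b#}" by (simp add: add_mset_commute)
          show ?thesis unfolding ia' jb' PTr_def M3_def prod.case e1 e2 by (simp only: e3 simp_thms if_True)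
        qed
        finally show "M3 p ia jb = (\<Sum>t\<in>?R. \<Sum>t'\<in>?R. (if True \<and> t = ?f ia then 1 else 0) * (if True \<and> t' = ?f jb then 1 else 0) * PTr p t t')"
          by simp
      qed
    qed
  next
    assume h: "\<forall>v. 0 \<le> (\<Sum>a\<in>?I. \<Sum>b\<in>?I. v a * M3 p a b * v b)"
    show "\<forall>w. 0 \<le> (\<Sum>r\<in>?R. \<Sum>c\<in>?R. w r * PTr p r c * w c)"
    proof
      fix w :: "nat\<times>nat\<times>nat \<Rightarrow> real"
      define A1 where "A1 r c = (if P1 r \<and> P1 c then M3 p (f1 r) (f1 c) else 0)" for r c
      define A2 where "A2 r c = (if f2 r = f2 c then D2 p (f2 r) else 0)" for r c
      define K2 where "K2 t t' = (if t = t' then D2 p t else 0)" for t t'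
      have split: "(\<Sum>r\<in>?R. \<Sum>c\<in>?R. w r * PTr p r c * w c) =
          (\<Sum>r\<in>?R. \<Sum>c\<in>?R. w r * A1 r c * w c) + (\<Sum>r\<in>?R. \<Sum>c\<in>?R. w r * A2 r c * w c)"
        unfolding sum.distrib[symmetric] A1_def A2_def PTr_split[of p]
        by (intro sum.cong refl) (simp add: algebra_simps)
      have f1R: "f1 r \<in> ?I" if "r \<in> ?R" for r
        using that unfolding f1_def idx3_def by auto
      have f2R: "f2 r \<in> ?R" if "r \<in> ?R" for r
        using that unfolding f2_def idx3_def by (auto simp: min_def max_def)
      have q1: "0 \<le> (\<Sum>r\<in>?R. \<Sum>c\<in>?R. w r * A1 r c * w c)"
      proof (rule congr_psd[where K = "M3 p" and I = ?I and \<phi> = "\<lambda>a r. if P1 r \<and> a = f1 r then 1 else 0"])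
        show "0 \<le> (\<Sum>a\<in>?I. \<Sum>b\<in>?I. u a * M3 p a b * u b)" for u using h by blast
      next
        fix r c assume rc: "r \<in> ?R" "c \<in> ?R"
        have "(\<Sum>a\<in>?I. \<Sum>b\<in>?I. (if P1 r \<and> a = f1 r then 1 else 0) * (if P1 c \<and> b = f1 c then 1 else 0) * M3 p a b)
            = (if P1 r \<and> P1 c then M3 p (f1 r) (f1 c) else 0)"
          by (rule delta2[where P=P1 and Q=P1 and r=r and c=c and f=f1 and g=f1]) (use f1R rc in auto)
        then show "A1 r c = (\<Sum>a\<in>?I. \<Sum>b\<in>?I. (if P1 r \<and> a = f1 r then 1 else 0) * (if P1 c \<and> b = f1 c then 1 else 0) * M3 p a b)"
          unfolding A1_def by (rule sym)
      qed
      have q2: "0 \<le> (\<Sum>r\<in>?R. \<Sum>c\<in>?R. w r * A2 r c * w c)"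
      proof (rule congr_psd[where K = K2 and I = ?R and \<phi> = "\<lambda>a r. if True \<and> a = f2 r then 1 else 0"])
        fix u :: "nat\<times>nat\<times>nat \<Rightarrow> real"
        have e: "u a * K2 a b * u b = (if b = a then u a * D2 p a * u a else 0)" for a b
          unfolding K2_def by auto
        have D2nn: "0 \<le> D2 p t" if "t \<in> ?R" for t
          using that pbar_nn unfolding D2_def idx3_def by (auto split: prod.splits)
        have sq: "0 \<le> u a * D2 p a * u a" if "a \<in> ?R" for a
        proof -
          have "u a * D2 p a * u a = D2 p a * (u a * u a)" by (simp only: ac_simps)
          also have "0 \<le> \<dots>" by (rule mult_nonneg_nonneg[OF D2nn[OF that] zero_le_square])
          finally show ?thesis by simp
        qed
        show "0 \<le> (\<Sum>a\<in>?R. \<Sum>b\<in>?R. u a * K2 a b * u b)"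
          unfolding e sum.delta[OF idx3_finite]
          by (intro sum_nonneg) (simp only: sq if_True)
      next
        fix r c assume rc: "r \<in> ?R" "c \<in> ?R"
        have "(\<Sum>a\<in>?R. \<Sum>b\<in>?R. (if True \<and> a = f2 r then 1 else 0) * (if True \<and> b = f2 c then 1 else 0) * K2 a b)
            = (if True \<and> True then K2 (f2 r) (f2 c) else 0)"
          by (rule delta2[where P="\<lambda>_. True" and Q="\<lambda>_. True" and r=r and c=c and f=f2 and g=f2]) (use f2R rc idx3_finite in auto)
        moreover have "(if True \<and> True then K2 (f2 r) (f2 c) else 0) = A2 r c"
          unfolding A2_def K2_def by (simp only: simp_thms if_True)
        ultimately show "A2 r c = (\<Sum>a\<in>?R. \<Sum>b\<in>?R. (if True \<and> a = f2 r then 1 else 0) * (if True \<and> b = f2 c then 1 else 0) * K2 a b)"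
          by (rule trans[symmetric])
      qed
      show "0 \<le> (\<Sum>r\<in>?R. \<Sum>c\<in>?R. w r * PTr p r c * w c)"
        unfolding split using q1 q2 by simp
    qed
  qed
qed

end
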